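(* Consider the stochastic online shortest path routing problem with end-to-end feedback over $T$ rounds on an identifiable network with $d$ (internal) links, mean delay vector $\boldsymbol{\mu}\in[0,1]^d$, unique optimal path, and an $S$-approximate barycentric spanner $\mathcal{B}$ of the path set. For any $T\geq d\overline{m}$ with $\overline{m}=\frac{S^2R^2(32\ln (2)d^2+128d\ln{T})}{\Delta^2_{\min}}$, the expected regret of the Top-Two Comparison (TTC) algorithm satisfies $$\mathbb{E}\left[\mathrm{Regret}_T(\mathrm{TTC})\right]\leq O\left(\frac{\left(d^2\ln{T}+d^3\right)\Delta_{\max}}{\Delta^2_{\min}}\right),$$ where constants depending on $R$ and $S$ are absorbed in $O(\cdot)$.
   Context: Model: directed acyclic network; external links (incident to source or destination) have known expected delay $0$; the internal network has $d$ links and its path set $\mathcal{A}\subseteq\{0,1\}^d$ ($a_j=1$ iff the path uses link $j$) spans $\mathbb{R}^d$. Unknown fixed mean delays $\boldsymbol{\mu}\in[0,1]^d$. In round $t$ the decision maker picks $\mathbf{a}_{I_t}\in\mathcal{A}$ and observes only $L_{t,I_t}=\langle\mathbf{a}_{I_t},\boldsymbol{\mu}\rangle+\eta_t$, with $\eta_t$ conditionally $R$-sub-Gaussian and conditionally mean zero given the past. Unique optimal path $\mathbf{a}_*$; gaps $\Delta_k=\langle\mathbf{a}_k-\mathbf{a}_*,\boldsymbol{\mu}\rangle$ for $\mathbf{a}_k\ne\mathbf{a}_*$, with maximum $\Delta_{\max}$ and minimum $\Delta_{\min}$; expected regret $\sum_{t=1}^T\mathbb{E}\langle\mathbf{a}_{I_t},\boldsymbol{\mu}\rangle-T\langle\mathbf{a}_*,\boldsymbol{\mu}\rangle$.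 $\mathcal{B}=\{\mathbf{b}_1,\dots,\mathbf{b}_d\}\subseteq\mathcal{A}$ is an $S$-approximate barycentric spanner: each $\mathbf{a}\in\mathcal{A}$ equals $\sum_i\nu_{\mathbf{a},i}\mathbf{b}_i$ with $|\nu_{\mathbf{a},i}|\le S$. TTC algorithm: set $\mathcal{A}_1=\mathcal{A}$ and $\tilde\Delta_m=SR\sqrt{(2\ln(2)d^2+8d\ln T)/m}$. In epoch $m=1,2,\dots$ (until $T$ rounds elapse): if $|\mathcal{A}_m|=1$, route through its unique path and set $\mathcal{A}_{m+1}=\mathcal{A}_m$; otherwise route once through each path of $\mathcal{B}$, compute the least squares estimate $\hat{\boldsymbol{\mu}}_m=(\mathcal{D}_m^{\top}\mathcal{D}_m)^{-1}\mathcal{D}_m^{\top}\mathbf{r}_m$ from all exploration rounds so far (rows of $\mathcal{D}_m$ are the chosen paths, $\mathbf{r}_m$ the observed delays), let $\tilde{\mathbf{a}}_m=\arg\min_{\mathbf{a}\in\mathcal{A}_m}\langle\mathbf{a},\hat{\boldsymbol{\mu}}_m\rangle$ and $\overline{\mathbf{a}}_m$ the path with second smallest estimated delay $\langle\cdot,\hat{\boldsymbol{\mu}}_m\rangle$; if $\langle\overline{\mathbf{a}}_m,\hat{\boldsymbol{\mu}}_m\rangle-\langle\tilde{\mathbf{a}}_m,\hat{\boldsymbol{\mu}}_m\rangle>2\tilde\Delta_m$ set $\mathcal{A}_{m+1}=\{\tilde{\mathbf{a}}_m\}$, else $\mathcal{A}_{m+1}=\mathcal{A}_m$. *)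

theory Defs
  imports "HOL-Probability.Probability" "Jordan_Normal_Form.Gauss_Jordan_Elimination"
begin

text \<open>Vectors of R^d are Jordan_Normal_Form vectors of dimension d; delays are
  linear: the expected delay of path a is scalar_prod a mu.\<close>

text \<open>Path set: finite set of 0/1 vectors of dimension d spanning R^d (identifiability).\<close>
definition path_set :: "nat \<Rightarrow> real vec set \<Rightarrow> bool" where
  "path_set d A \<longleftrightarrow> finite A \<and> A \<noteq> {} \<and>
     (\<forall>a\<in>A. dim_vec a = d \<and> (\<forall>j<d. a $ j = 0 \<or> a $ j = 1)) \<and>
     (\<forall>x. dim_vec x = d \<longrightarrow> (\<exists>c. \<forall>j<d. x $ j = (\<Sum>a\<in>A. c a * a $ j)))"

definition approx_bary_spanner :: "nat \<Rightarrow> real vec set \<Rightarrow> real \<Rightarrow> (nat \<Rightarrow> real vec) \<Rightarrow> bool" where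
  "approx_bary_spanner d A S b \<longleftrightarrow> (\<forall>i<d. b i \<in> A) \<and>
     (\<forall>a\<in>A. \<exists>\<nu>::nat \<Rightarrow> real. (\<forall>j<d. a $ j = (\<Sum>i<d. \<nu> i * b i $ j)) \<and> (\<forall>i<d. \<bar>\<nu> i\<bar> \<le> S))"

definition unique_opt :: "nat \<Rightarrow> real vec set \<Rightarrow> real vec \<Rightarrow> real vec \<Rightarrow> bool" where
  "unique_opt d A mu a_star \<longleftrightarrow> dim_vec mu = d \<and> (\<forall>j<d. 0 \<le> mu $ j \<and> mu $ j \<le> 1) \<and>
     a_star \<in> A \<and> (\<forall>a\<in>A. a \<noteq> a_star \<longrightarrow> scalar_prod a_star mu < scalar_prod a mu)"

definition gaps :: "real vec set \<Rightarrow> real vec \<Rightarrow> real vec \<Rightarrow> real set" where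
  "gaps A mu a_star = (\<lambda>a. scalar_prod a mu - scalar_prod a_star mu) ` (A - {a_star})"

definition Delta_max :: "real vec set \<Rightarrow> real vec \<Rightarrow> real vec \<Rightarrow> real" where
  "Delta_max A mu a_star = Max (gaps A mu a_star)"

definition Delta_min :: "real vec set \<Rightarrow> real vec \<Rightarrow> real vec \<Rightarrow> real" where
  "Delta_min A mu a_star = Min (gaps A mu a_star)"

text \<open>Least squares estimate (D^T D)^{-1} D^T r from the exploration history
  (list of pairs (chosen path, observed delay)).\<close>
definition ls_estimate :: "nat \<Rightarrow> (real vec \<times> real) list \<Rightarrow> real vec" where
  "ls_estimate d h = (let D = mat_of_rows d (map fst h); r = vec_of_list (map snd h) in
      the (mat_inverse (transpose_mat D * D)) *\<^sub>v (transpose_mat D *\<^sub>v r))"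

text \<open>End-of-epoch decision of TTC (after m = length h div d exploration epochs).
  Returns Some a if A_{m+1} = {a}, None if A_{m+1} = A_m = A.\<close>
definition ttc_decide :: "nat \<Rightarrow> real vec set \<Rightarrow> real \<Rightarrow> real \<Rightarrow> nat \<Rightarrow>
    (real vec \<times> real) list \<Rightarrow> real vec option" where
  "ttc_decide d A S R T h = (let m = length h div d; muh = ls_estimate d h;
      atil = arg_min_on (\<lambda>a. scalar_prod a muh) A;
      abar = arg_min_on (\<lambda>a. scalar_prod a muh) (A - {atil});
      Dt = S * R * sqrt ((2 * ln 2 * real d ^ 2 + 8 * real d * ln (real T)) / real m)
    in if scalar_prod abar muh - scalar_prod atil muh > 2 * Dt then Some atil else None)"

text \<open>State of TTC before round t (rounds numbered 0,1,...): (committed path if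
  the active set is a singleton, position inside the current exploration epoch,
  exploration history). The noise realisation is e, e t being the noise of round t.\<close>
primrec ttc_state :: "nat \<Rightarrow> real vec set \<Rightarrow> (nat \<Rightarrow> real vec) \<Rightarrow> real vec \<Rightarrow> real \<Rightarrow> real \<Rightarrow> nat \<Rightarrow>
    (nat \<Rightarrow> real) \<Rightarrow> nat \<Rightarrow> real vec option \<times> nat \<times> (real vec \<times> real) list" where
  "ttc_state d A b mu S R T e 0 = (if card A = 1 then Some (the_elem A) else None, 0, [])"
| "ttc_state d A b mu S R T e (Suc t) =
     (case ttc_state d A b mu S R T e t of
        (Some a, k, h) \<Rightarrow> (Some a, k, h)
      | (None, k, h) \<Rightarrow>
          (let p = b k; h' = h @ [(p, scalar_prod p mu + e t)] in
           if Suc k < d then (None, Suc k, h') else (ttc_decide d A S R T h', 0, h')))"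

definition ttc_path :: "nat \<Rightarrow> real vec set \<Rightarrow> (nat \<Rightarrow> real vec) \<Rightarrow> real vec \<Rightarrow> real \<Rightarrow> real \<Rightarrow> nat \<Rightarrow>
    (nat \<Rightarrow> real) \<Rightarrow> nat \<Rightarrow> real vec" where
  "ttc_path d A b mu S R T e t = (case ttc_state d A b mu S R T e t of
      (Some a, k, h) \<Rightarrow> a | (None, k, h) \<Rightarrow> b k)"

text \<open>Noise model: M is a probability measure on noise sequences (omega t is the noise
  of round t), F t is the information available before round t (a filtration),
  the noise is adapted and conditionally R-sub-Gaussian with conditional mean zero.\<close>
definition noise_model :: "(nat \<Rightarrow> real) measure \<Rightarrow> (nat \<Rightarrow> (nat \<Rightarrow> real) measure) \<Rightarrow> real \<Rightarrow> bool" where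
  "noise_model M F R \<longleftrightarrow> prob_space M \<and>
     (\<forall>t. subalgebra M (F t) \<and> sets (F t) \<subseteq> sets (F (Suc t)) \<and>
          (\<lambda>\<omega>. \<omega> t) \<in> borel_measurable (F (Suc t)) \<and>
          integrable M (\<lambda>\<omega>. \<omega> t) \<and>
          (AE \<omega> in M. real_cond_exp M (F t) (\<lambda>\<omega>. \<omega> t) \<omega> = 0) \<and>
          (\<forall>s::real. integrable M (\<lambda>\<omega>. exp (s * \<omega> t)) \<and>
              (AE \<omega> in M. real_cond_exp M (F t) (\<lambda>\<omega>. exp (s * \<omega> t)) \<omega> \<le> exp (s\<^sup>2 * R\<^sup>2 / 2))))"

definition ttc_regret :: "nat \<Rightarrow> real vec set \<Rightarrow> (nat \<Rightarrow> real vec) \<Rightarrow> real vec \<Rightarrow> real \<Rightarrow> real \<Rightarrow>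
    (nat \<Rightarrow> real) measure \<Rightarrow> real vec \<Rightarrow> nat \<Rightarrow> real" where
  "ttc_regret d A b mu S R M a_star T =
     (\<Sum>t<T. integral\<^sup>L M (\<lambda>\<omega>. scalar_prod (ttc_path d A b mu S R T \<omega> t) mu))
     - real T * scalar_prod a_star mu"

end

theory Submission
  imports Defs "Jordan_Normal_Form.Determinant"
begin

lemma span_zero:
  assumes PS: "path_set d A" and SP: "approx_bary_spanner d A S b"
    and v: "v \<in> carrier_vec d" and bv: "\<And>i. i < d \<Longrightarrow> scalar_prod (b i) v = 0"
  shows "v = 0\<^sub>v d"
proof -
  have dv: "dim_vec v = d" using v by auto
  have av: "scalar_prod (a) v = 0" if a: "a \<in> A" for a
  proof -
    obtain \<nu> where nu: "\<forall>j<d. a $ j = (\<Sum>i<d. \<nu> i * b i $ j)"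
      using SP a unfolding approx_bary_spanner_def by blast
    have "scalar_prod (a) v = (\<Sum>j<d. a $ j * v $ j)" unfolding scalar_prod_def dv
      by (simp add: atLeast0LessThan)
    also have "\<dots> = (\<Sum>j<d. (\<Sum>i<d. \<nu> i * b i $ j) * v $ j)" using nu by simp
    also have "\<dots> = (\<Sum>i<d. \<nu> i * (\<Sum>j<d. b i $ j * v $ j))"
      unfolding sum_distrib_right sum_distrib_left mult.assoc by (rule sum.swap)
    also have "\<dots> = (\<Sum>i<d. \<nu> i * scalar_prod (b i) v)" unfolding scalar_prod_def dv
      by (simp add: atLeast0LessThan)
    also have "\<dots> = 0" using bv by simp
    finally show ?thesis .
  qed
  obtain c where c: "\<forall>j<d. v $ j = (\<Sum>a\<in>A. c a * a $ j)"
    using PS dv unfolding path_set_def by blast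
  have fin: "finite A" using PS unfolding path_set_def by auto
  have dA: "dim_vec a = d" if "a \<in> A" for a using PS that unfolding path_set_def by auto
  have "(\<Sum>j<d. v $ j * v $ j) = (\<Sum>j<d. (\<Sum>a\<in>A. c a * a $ j) * v $ j)" using c by simp
  also have "\<dots> = (\<Sum>a\<in>A. c a * (\<Sum>j<d. a $ j * v $ j))"
    unfolding sum_distrib_right sum_distrib_left mult.assoc by (rule sum.swap)
  also have "\<dots> = (\<Sum>a\<in>A. c a * scalar_prod a v)" unfolding scalar_prod_def dv
    by (simp add: atLeast0LessThan)
  also have "\<dots> = 0" using av by simp
  finally have s0: "(\<Sum>j<d. v $ j * v $ j) = 0" .
  have "\<forall>j\<in>{..<d}. v $ j * v $ j = 0"
    using sum_nonneg_eq_0_iff[of "{..<d}" "\<lambda>j. v $ j * v $ j"] s0 by simp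
  then show ?thesis using dv by (intro eq_vecI) auto
qed

lemma path_setD:
  fixes A :: "real vec set"
  assumes "path_set d A"
  shows "finite A" "A \<noteq> {}" "\<forall>a\<in>A. dim_vec a = d" "\<forall>a\<in>A. \<forall>j<d. a $ j = 0 \<or> a $ j = 1"
    "\<forall>x. dim_vec x = d \<longrightarrow> (\<exists>c. \<forall>j<d. x $ j = (\<Sum>a\<in>A. c a * a $ j))"
  using assms unfolding path_set_def by (simp_all add: ball_conj_distrib)

lemma sum_reindex_md:
  fixes f :: "nat \<Rightarrow> real"
  shows "(\<Sum>q<m*d. f q) = (\<Sum>i<d. \<Sum>k<m. f (k*d+i))"
proof (induction m)
  case 0 then show ?case by simp
next
  case (Suc m)
  have aux: "(\<Sum>q<a+n. f q) = (\<Sum>q<a. f q) + (\<Sum>i<n. f (a+i))" for a n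
    by (induction n) (auto simp: add.assoc)
  have "(\<Sum>q<Suc m*d. f q) = (\<Sum>q<m*d. f q) + (\<Sum>i<d. f (m*d+i))"
    using aux[of "m*d" d] by (simp add: add.commute)
  also have "\<dots> = (\<Sum>i<d. \<Sum>k<Suc m. f (k*d+i))"
    using Suc by (simp add: sum.distrib)
  finally show ?case .
qed

definition hist :: "nat \<Rightarrow> (nat \<Rightarrow> real vec) \<Rightarrow> real vec \<Rightarrow> (nat \<Rightarrow> real) \<Rightarrow> nat \<Rightarrow> (real vec \<times> real) list" where
  "hist d b mu e n = map (\<lambda>k. (b (k mod d), scalar_prod (b (k mod d)) mu + e k)) [0..<n]"

lemma ls_hist:
  assumes PS: "path_set d A" and SP: "approx_bary_spanner d A S b"
    and dmu: "dim_vec mu = d" and d0: "0 < d" and m0: "0 < m" and i: "i < d"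
  shows "dim_vec (ls_estimate d (hist d b mu e (m*d))) = d"
    and "scalar_prod (b i) (ls_estimate d (hist d b mu e (m*d)))
       = scalar_prod (b i) mu + (\<Sum>k<m. e (k*d+i)) / real m"
proof -
  define L where "L = m*d"
  define h where "h = hist d b mu e L"
  define D where "D = mat_of_rows d (map fst h)"
  define r where "r = vec_of_list (map snd h)"
  define G where "G = transpose_mat D * D"
  have dimA: "\<forall>a\<in>A. dim_vec a = d" using path_setD[OF PS] by blast
  have bA: "b j \<in> A" if "j < d" for j using SP that unfolding approx_bary_spanner_def by auto
  have bc: "b j \<in> carrier_vec d" if "j < d" for j
    using bA[OF that] dimA unfolding carrier_vec_def by blast
  have lh: "length h = L" unfolding h_def hist_def by simp
  have Dc: "D \<in> carrier_mat L d" unfolding D_def using mat_of_rows_carrier(1)[of d "map fst h"] lh by simp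
  have rc: "r \<in> carrier_vec L" unfolding r_def using lh dim_vec_of_list[of "map snd h"] length_map[of snd h] by (intro carrier_vecI) argo
  have Gc: "G \<in> carrier_mat d d" unfolding G_def using mult_carrier_mat[OF transpose_carrier_mat[THEN iffD2, OF Dc] Dc] .
  have hq: "h ! q = (b (q mod d), scalar_prod (b (q mod d)) mu + e q)" if "q < L" for q
    unfolding h_def hist_def using that by simp
  have rowD: "row D q = b (q mod d)" if "q < L" for q
  proof -
    have "map fst h ! q = b (q mod d)" using hq[OF that] lh that by simp
    moreover have "map fst h ! q \<in> carrier_vec d" using calculation bc[of "q mod d"] d0 by simp
    ultimately show ?thesis unfolding D_def using mat_of_rows_row[of q "map fst h" d] lh that by simp
  qed
  have Dv: "(D *\<^sub>v v) $ q = scalar_prod (b (q mod d)) v" if "q < L" for q v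
    using index_mult_mat_vec[of q D v] Dc rowD[OF that] that by simp
  have DTw: "(transpose_mat D *\<^sub>v w) $ j = (\<Sum>q<L. b (q mod d) $ j * w $ q)"
    if "j < d" "w \<in> carrier_vec L" for j w
  proof -
    have "(transpose_mat D *\<^sub>v w) $ j = scalar_prod (col D j) w" using that Dc by simp
    also have "\<dots> = (\<Sum>q<L. D $$ (q,j) * w $ q)" using that Dc
      unfolding scalar_prod_def by (simp add: atLeast0LessThan)
    also have "\<dots> = (\<Sum>q<L. b (q mod d) $ j * w $ q)"
    proof (rule sum.cong)
      fix q assume "q \<in> {..<L}"
      then have "D $$ (q,j) = row D q $ j" using that Dc by simp
      then show "D $$ (q,j) * w $ q = b (q mod d) $ j * w $ q" using rowD \<open>q \<in> {..<L}\<close> by simp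
    qed simp
    finally show ?thesis .
  qed
  have rq: "r $ q = scalar_prod (b (q mod d)) mu + e q" if "q < L" for q
  proof -
    have "r $ q = map snd h ! q" unfolding r_def by (rule vec_of_list_index)
    also have "\<dots> = scalar_prod (b (q mod d)) mu + e q" using hq[OF that] lh that by simp
    finally show ?thesis .
  qed
  have dL: "d \<le> L" unfolding L_def using m0 by simp
  have detG: "det G \<noteq> 0"
  proof
    assume "det G = 0"
    then obtain v where v: "v \<in> carrier_vec d" "v \<noteq> 0\<^sub>v d" "G *\<^sub>v v = 0\<^sub>v d"
      using det_0_iff_vec_prod_zero[OF Gc] by blast
    define y where "y = D *\<^sub>v v"
    have yc: "y \<in> carrier_vec L" unfolding y_def using Dc v(1) by simp
    have "scalar_prod y y = scalar_prod (transpose_mat D *\<^sub>v y) v"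
      using transpose_vec_mult_scalar[OF Dc v(1) yc] y_def by simp
    also have "transpose_mat D *\<^sub>v y = G *\<^sub>v v" unfolding y_def G_def
      using assoc_mult_mat_vec[of "transpose_mat D" d L D d v] Dc v(1) by simp
    finally have "scalar_prod y y = scalar_prod (G *\<^sub>v v) v" .
    then have yy: "scalar_prod y y = 0" using v(3) v(1) by simp
    have dy: "dim_vec y = L" using yc by simp
    have "(\<Sum>q<L. y $ q * y $ q) = 0" using yy unfolding scalar_prod_def dy
      by (simp add: atLeast0LessThan)
    then have y0: "\<forall>q\<in>{..<L}. y $ q * y $ q = 0"
      using sum_nonneg_eq_0_iff[of "{..<L}" "\<lambda>q. y $ q * y $ q"] by simp
    have "scalar_prod (b i) v = 0" if "i < d" for i
    proof -
      have "i < L" using that dL by simp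
      then have "y $ i = scalar_prod (b (i mod d)) v" unfolding y_def by (rule Dv)
      then show ?thesis using y0 \<open>i < L\<close> that by simp
    qed
    then have "v = 0\<^sub>v d" using span_zero[OF PS SP v(1)] by blast
    then show False using v(2) by simp
  qed
  have "G \<in> Units (ring_mat TYPE(real) d ())"
    by (rule det_non_zero_imp_unit[OF Gc detG])
  then have "mat_inverse G \<noteq> None" using mat_inverse(1)[OF Gc, where b="()"] by blast
  then obtain G' where G': "mat_inverse G = Some G'" by blast
  have GG': "G * G' = 1\<^sub>m d" and G'c: "G' \<in> carrier_mat d d"
    using mat_inverse(2)[OF Gc G'] by auto
  define muh where "muh = ls_estimate d h"
  have muh: "muh = G' *\<^sub>v (transpose_mat D *\<^sub>v r)"
    unfolding muh_def ls_estimate_def Let_def D_def[symmetric] r_def[symmetric] G_def[symmetric] G'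
    by simp
  have DTr: "transpose_mat D *\<^sub>v r \<in> carrier_vec d" using Dc rc by simp
  have muhc: "muh \<in> carrier_vec d" unfolding muh using G'c DTr by simp
  then show "dim_vec (ls_estimate d (hist d b mu e (m*d))) = d" unfolding muh_def h_def L_def by simp
  have "G *\<^sub>v muh = (G * G') *\<^sub>v (transpose_mat D *\<^sub>v r)"
    unfolding muh using assoc_mult_mat_vec[OF Gc G'c DTr] by simp
  also have "\<dots> = transpose_mat D *\<^sub>v r" unfolding GG' using DTr by simp
  finally have e1: "G *\<^sub>v muh = transpose_mat D *\<^sub>v r" .
  have e2: "G *\<^sub>v muh = transpose_mat D *\<^sub>v (D *\<^sub>v muh)" unfolding G_def
    using assoc_mult_mat_vec[of "transpose_mat D" d L D d muh] Dc muhc by simp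
  define w where "w = D *\<^sub>v muh - r"
  have Dmc: "D *\<^sub>v muh \<in> carrier_vec L" using Dc muhc by simp
  have wc: "w \<in> carrier_vec L" unfolding w_def using Dmc rc by simp
  have "transpose_mat D *\<^sub>v w = transpose_mat D *\<^sub>v (D *\<^sub>v muh) - transpose_mat D *\<^sub>v r"
    unfolding w_def by (rule mult_minus_distrib_mat_vec[OF _ Dmc rc]) (use Dc in simp)
  also have "\<dots> = 0\<^sub>v d" using e1 e2 DTr by simp
  finally have DTw0: "transpose_mat D *\<^sub>v w = 0\<^sub>v d" .
  have wq: "w $ q = scalar_prod (b (q mod d)) muh - (scalar_prod (b (q mod d)) mu + e q)"
    if "q < L" for q
    unfolding w_def using that Dmc rc Dv[OF that] rq[OF that] by simp
  define c where "c i = (\<Sum>k<m. w $ (k*d+i))" for i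
  have cj: "(\<Sum>i<d. b i $ j * c i) = 0" if "j < d" for j
  proof -
    have "0 = (transpose_mat D *\<^sub>v w) $ j" using DTw0 that by simp
    also have "\<dots> = (\<Sum>q<L. b (q mod d) $ j * w $ q)" by (rule DTw[OF that wc])
    also have "\<dots> = (\<Sum>i<d. \<Sum>k<m. b ((k*d+i) mod d) $ j * w $ (k*d+i))"
      unfolding L_def by (rule sum_reindex_md)
    also have "\<dots> = (\<Sum>i<d. b i $ j * c i)" unfolding c_def sum_distrib_left
      by (intro sum.cong refl) simp
    finally show ?thesis by simp
  qed
  define B where "B = mat_of_rows d (map b [0..<d])"
  have Bc: "B \<in> carrier_mat d d" unfolding B_def using mat_of_rows_carrier(1)[of d "map b [0..<d]"] by simp
  have rowB: "row B i = b i" if "i < d" for i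
    unfolding B_def using mat_of_rows_row[of i "map b [0..<d]" d] that bc[OF that] by simp
  define cv where "cv = vec d c"
  have cvc: "cv \<in> carrier_vec d" unfolding cv_def by simp
  have c0: "c i = 0" if "i < d" for i
  proof (rule ccontr)
    assume "c i \<noteq> 0"
    then have "cv \<noteq> 0\<^sub>v d" unfolding cv_def using that by (metis index_vec index_zero_vec(1))
    moreover have "transpose_mat B *\<^sub>v cv = 0\<^sub>v d"
    proof (rule eq_vecI)
      fix j assume j: "j < dim_vec (0\<^sub>v d :: real vec)"
      then have j': "j < d" by simp
      have "(transpose_mat B *\<^sub>v cv) $ j = scalar_prod (col B j) cv" using j' Bc by simp
      also have "\<dots> = (\<Sum>i<d. B $$ (i,j) * cv $ i)" using j' Bc cvc
        unfolding scalar_prod_def by (simp add: atLeast0LessThan cv_def)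
      also have "\<dots> = (\<Sum>i<d. b i $ j * c i)"
      proof (rule sum.cong)
        fix i assume i: "i \<in> {..<d}"
        then have "B $$ (i,j) = row B i $ j" using j' Bc by simp
        then show "B $$ (i,j) * cv $ i = b i $ j * c i" using rowB i cv_def by simp
      qed simp
      also have "\<dots> = 0" using cj[OF j'] .
      finally show "(transpose_mat B *\<^sub>v cv) $ j = 0\<^sub>v d $ j" using j' by simp
    qed (use Bc in simp)
    ultimately have "det (transpose_mat B) = 0"
      using det_0_iff_vec_prod_zero[of "transpose_mat B" d] Bc cvc by auto
    then have "det B = 0" using det_transpose[OF Bc] by simp
    then obtain v where v: "v \<in> carrier_vec d" "v \<noteq> 0\<^sub>v d" "B *\<^sub>v v = 0\<^sub>v d"
      using det_0_iff_vec_prod_zero[OF Bc] by blast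
    have "scalar_prod (b k) v = 0" if "k < d" for k
    proof -
      have "(B *\<^sub>v v) $ k = scalar_prod (row B k) v" using that Bc by simp
      then show ?thesis using v(3) rowB[OF that] that by simp
    qed
    then have "v = 0\<^sub>v d" using span_zero[OF PS SP v(1)] by blast
    then show False using v(2) by simp
  qed
  have "c i = (\<Sum>k<m. scalar_prod (b i) muh - (scalar_prod (b i) mu + e (k*d+i)))"
    unfolding c_def
  proof (intro sum.cong refl)
    fix k assume "k \<in> {..<m}"
    then have k: "k < m" by simp
    have "k*d+i < (k+1)*d" using i by simp
    also have "(k+1)*d \<le> m*d" using k by (intro mult_right_mono) auto
    finally have "k*d+i < L" unfolding L_def .
    then show "w $ (k*d+i) = scalar_prod (b i) muh - (scalar_prod (b i) mu + e (k*d+i))"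
      using wq[of "k*d+i"] i by simp
  qed
  also have "\<dots> = real m * scalar_prod (b i) muh - real m * scalar_prod (b i) mu - (\<Sum>k<m. e (k*d+i))"
    by (simp add: sum_subtractf sum.distrib)
  finally have "real m * scalar_prod (b i) muh - real m * scalar_prod (b i) mu - (\<Sum>k<m. e (k*d+i)) = 0"
    using c0[OF i] by simp
  then show "scalar_prod (b i) (ls_estimate d (hist d b mu e (m*d)))
       = scalar_prod (b i) mu + (\<Sum>k<m. e (k*d+i)) / real m" unfolding muh_def h_def L_def using m0
    by (simp add: field_simps)
qed


lemma decide_in:
  assumes fin: "finite A" and ne: "A \<noteq> {}" and D: "ttc_decide d A S R T h = Some a"
  shows "a \<in> A"
proof -
  have "a = arg_min_on (\<lambda>a. scalar_prod a (ls_estimate d h)) A"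
    using D unfolding ttc_decide_def Let_def by (auto split: if_splits)
  then show ?thesis using arg_min_if_finite(1)[OF fin ne] by simp
qed

lemma decide_good:
  fixes A :: "real vec set"
  assumes fin: "finite A" and ast: "a_star \<in> A" and two: "A \<noteq> {a_star}"
    and gap: "\<And>a. a \<in> A \<Longrightarrow> a \<noteq> a_star \<Longrightarrow> Dm \<le> scalar_prod a mu - scalar_prod a_star mu"
    and Dm0: "0 < Dm"
    and Dt: "Dt = S * R * sqrt ((2 * ln 2 * real d ^ 2 + 8 * real d * ln (real T)) / real (length h div d))"
    and est: "\<And>a. a \<in> A \<Longrightarrow> \<bar>scalar_prod a (ls_estimate d h) - scalar_prod a mu\<bar> \<le> Dt"
  shows "ttc_decide d A S R T h \<in> {None, Some a_star}"
    and "4 * Dt < Dm \<Longrightarrow> ttc_decide d A S R T h = Some a_star"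
proof -
  define muh where "muh = ls_estimate d h"
  define f where "f = (\<lambda>a. scalar_prod a muh)"
  define atil where "atil = arg_min_on f A"
  define abar where "abar = arg_min_on f (A - {atil})"
  have ne: "A \<noteq> {}" using ast by auto
  have atA: "atil \<in> A" unfolding atil_def using arg_min_if_finite(1)[OF fin ne] .
  have atmin: "f atil \<le> f a" if "a \<in> A" for a
    unfolding atil_def using arg_min_least[OF fin ne that] .
  have ne2: "A - {atil} \<noteq> {}" using two ast atA by blast
  have fin2: "finite (A - {atil})" using fin by simp
  have abA: "abar \<in> A - {atil}" unfolding abar_def using arg_min_if_finite(1)[OF fin2 ne2] .
  have abmin: "f abar \<le> f a" if "a \<in> A - {atil}" for a
    unfolding abar_def using arg_min_least[OF fin2 ne2 that] .
  have dec: "ttc_decide d A S R T h = (if f abar - f atil > 2 * Dt then Some atil else None)"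
    unfolding ttc_decide_def Let_def Dt f_def abar_def atil_def muh_def by simp
  have estf: "\<bar>f a - scalar_prod a mu\<bar> \<le> Dt" if "a \<in> A" for a
    unfolding f_def muh_def using est[OF that] .
  show "ttc_decide d A S R T h \<in> {None, Some a_star}"
  proof (cases "f abar - f atil > 2 * Dt")
    case True
    have "atil = a_star"
    proof (rule ccontr)
      assume ne: "atil \<noteq> a_star"
      then have "a_star \<in> A - {atil}" using ast by simp
      then have "f abar \<le> f a_star" by (rule abmin)
      moreover have "Dm \<le> scalar_prod atil mu - scalar_prod a_star mu" using gap[OF atA ne] .
      ultimately show False using estf[OF atA] estf[OF ast] True Dm0 by linarith
    qed
    then show ?thesis using dec True by simp
  next
    case False
    then show ?thesis using dec by simp
  qed
  assume small: "4 * Dt < Dm"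
  have Dt0: "0 \<le> Dt" using estf[OF ast] by linarith
  have atil: "atil = a_star"
  proof (rule ccontr)
    assume ne: "atil \<noteq> a_star"
    have "f atil \<le> f a_star" using atmin[OF ast] .
    then show False using estf[OF atA] estf[OF ast] gap[OF atA ne] small Dt0 by linarith
  qed
  have abne: "abar \<noteq> a_star" using abA atil by simp
  have "f abar - f atil > 2 * Dt"
    using estf[of abar] abA estf[OF atA] gap[of abar] abne atil small Dt0 by auto
  then show "ttc_decide d A S R T h = Some a_star" using dec atil by simp
qed


lemma hist_Suc: "hist d b mu e (Suc t) = hist d b mu e t @ [(b (t mod d), scalar_prod (b (t mod d)) mu + e t)]"
  unfolding hist_def by simp

lemma length_hist[simp]: "length (hist d b mu e n) = n"
  unfolding hist_def by simp

lemma st_step_none: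
  assumes "ttc_state d A b mu S R T e t = (None, k, h)"
  shows "ttc_state d A b mu S R T e (Suc t) =
    (let h' = h @ [(b k, scalar_prod (b k) mu + e t)] in
      if Suc k < d then (None, Suc k, h') else (ttc_decide d A S R T h', 0, h'))"
  using assms by (simp add: Let_def)

lemma st_step_some:
  assumes "ttc_state d A b mu S R T e t = (Some a, k, h)"
  shows "ttc_state d A b mu S R T e (Suc t) = (Some a, k, h)"
  using assms by simp

lemma st_none:
  assumes d0: "0 < d" and N: "fst (ttc_state d A b mu S R T e t) = None"
  shows "snd (ttc_state d A b mu S R T e t) = (t mod d, hist d b mu e t)"
  using N
proof (induction t)
  case 0
  then show ?case by (simp add: hist_def split: if_splits)
next
  case (Suc t)
  obtain x k h where st: "ttc_state d A b mu S R T e t = (x, k, h)" by (metis prod_cases3)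
  show ?case
  proof (cases x)
    case (Some a)
    then show ?thesis using Suc.prems st by simp
  next
    case None
    with Suc.IH st have kh: "k = t mod d" "h = hist d b mu e t" by auto
    have kd: "k < d" using kh d0 by simp
    note step = st_step_none[OF st[unfolded None]]
    show ?thesis
    proof (cases "Suc k < d")
      case True
      then have "Suc t mod d = Suc k" using kh by (simp add: mod_Suc)
      then show ?thesis using step True kh by (simp add: Let_def hist_Suc)
    next
      case False
      then have "Suc t mod d = 0" using kh kd by (simp add: mod_Suc)
      then show ?thesis using step False kh Suc.prems by (simp add: Let_def hist_Suc)
    qed
  qed
qed

lemma st_persist:
  assumes "fst (ttc_state d A b mu S R T e t) = Some a"
  shows "fst (ttc_state d A b mu S R T e (t + n)) = Some a"
proof (induction n)
  case 0 then show ?case using assms by simp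
next
  case (Suc n)
  obtain k h where "ttc_state d A b mu S R T e (t+n) = (Some a, k, h)"
    using Suc.IH by (metis prod.collapse)
  then show ?case by simp
qed

lemma st_in_A:
  assumes fin: "finite A" and ne: "A \<noteq> {}"
  shows "fst (ttc_state d A b mu S R T e t) \<in> insert None (Some ` A)"
proof (induction t)
  case 0
  show ?case
  proof (cases "card A = 1")
    case True
    then obtain x where "A = {x}" using card_1_singletonE by blast
    then show ?thesis by simp
  next
    case False then show ?thesis by simp
  qed
next
  case (Suc t)
  obtain x k h where st: "ttc_state d A b mu S R T e t = (x, k, h)" by (metis prod_cases3)
  show ?case
  proof (cases x)
    case (Some a)
    then show ?thesis using Suc.IH st by simp
  next
    case None
    note step = st_step_none[OF st[unfolded None]]
    define h' where "h' = h @ [(b k, scalar_prod (b k) mu + e t)]"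
    have "ttc_decide d A S R T h' \<in> insert None (Some ` A)"
      using decide_in[OF fin ne, of d S R T h'] by (cases "ttc_decide d A S R T h'") auto
    then show ?thesis using step unfolding h'_def[symmetric] by (simp add: Let_def)
  qed
qed

lemma path_in_A:
  assumes fin: "finite A" and ne: "A \<noteq> {}" and d0: "0 < d"
    and bA: "\<And>i. i < d \<Longrightarrow> b i \<in> A"
  shows "ttc_path d A b mu S R T e t \<in> A"
proof -
  obtain x k h where st: "ttc_state d A b mu S R T e t = (x, k, h)" by (metis prod_cases3)
  show ?thesis
  proof (cases x)
    case None
    then have "k = t mod d" using st_none[OF d0, of A b mu S R T e t] st by simp
    then show ?thesis using st None bA d0 unfolding ttc_path_def by simp
  next
    case (Some a)
    then have "a \<in> A" using st_in_A[OF fin ne, of d b mu S R T e t] st by auto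
    then show ?thesis using st Some unfolding ttc_path_def by simp
  qed
qed

lemma st_good:
  assumes d0: "0 < d" and M0: "0 < M" and cA: "card A \<noteq> 1"
    and good: "\<And>m. 1 \<le> m \<Longrightarrow> m \<le> M \<Longrightarrow> ttc_decide d A S R T (hist d b mu e (m*d)) \<in> {None, Some a_star}"
    and goodM: "ttc_decide d A S R T (hist d b mu e (M*d)) = Some a_star"
    and t: "M * d \<le> t"
  shows "fst (ttc_state d A b mu S R T e t) = Some a_star"
proof -
  let ?st = "ttc_state d A b mu S R T e"
  have inv: "t \<le> M * d \<Longrightarrow> fst (?st t) \<in> {None, Some a_star}" for t
  proof (induction t)
    case 0 then show ?case using cA by simp
  next
    case (Suc t)
    obtain x k h where st: "?st t = (x, k, h)" by (metis prod_cases3)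
    from Suc have IH: "x \<in> {None, Some a_star}" using st by simp
    show ?case
    proof (cases x)
      case (Some a)
      then show ?thesis using IH st by simp
    next
      case None
      with st_none[OF d0, of A b mu S R T e t] st have kh: "k = t mod d" "h = hist d b mu e t" by auto
      note step = st_step_none[OF st[unfolded None]]
      show ?thesis
      proof (cases "Suc k < d")
        case True
        then show ?thesis using step by (simp add: Let_def)
      next
        case False
        have kd: "k < d" using kh d0 by simp
        then have md: "Suc t mod d = 0" using False kh by (simp add: mod_Suc)
        define m where "m = Suc t div d"
        have tm: "Suc t = m * d" unfolding m_def using md div_mult_mod_eq[of "Suc t" d] by simp
        have m1: "1 \<le> m" using tm by (cases m) auto
        have "m * d \<le> M * d" using tm Suc.prems by simp
        then have mM: "m \<le> M" using d0 by simp
        have "h @ [(b k, scalar_prod (b k) mu + e t)] = hist d b mu e (m*d)"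
          using kh tm hist_Suc[of d b mu e t] by simp
        then show ?thesis using step False good[OF m1 mM] by (simp add: Let_def)
      qed
    qed
  qed
  have atM: "fst (?st (M*d)) = Some a_star"
  proof -
    have "M * d \<noteq> 0" using M0 d0 by simp
    then obtain t0 where t0: "M * d = Suc t0" using not0_implies_Suc by blast
    obtain x k h where st: "?st t0 = (x, k, h)" by (metis prod_cases3)
    have "x \<in> {None, Some a_star}" using inv[of t0] t0 st by simp
    then show ?thesis
    proof
      assume "x = None"
      with st_none[OF d0, of A b mu S R T e t0] st have kh: "k = t0 mod d" "h = hist d b mu e t0" by auto
      have "Suc t0 mod d = 0" using t0[symmetric] by simp
      then have "\<not> Suc k < d" using kh by (auto simp: mod_Suc split: if_splits)
      moreover have "h @ [(b k, scalar_prod (b k) mu + e t0)] = hist d b mu e (M*d)"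
        using kh t0 hist_Suc[of d b mu e t0] by simp
      ultimately show ?thesis using st_step_none[OF st[unfolded \<open>x = None\<close>]] t0 goodM
        by (simp add: Let_def)
    next
      assume "x \<in> {Some a_star}"
      then show ?thesis using st t0 by simp
    qed
  qed
  show ?thesis using st_persist[OF atM, of "t - M*d"] t by simp
qed



lemma cond_exp_bound:
  fixes M F :: "'a measure"
  assumes P: "prob_space M" and sub: "subalgebra M F"
    and Y: "Y \<in> borel_measurable F" and gm: "g \<in> borel_measurable M" and gi: "integrable M g"
    and g0: "\<And>x. 0 \<le> g x" and K: "AE x in M. real_cond_exp M F g x \<le> K"
  shows "(\<integral>\<^sup>+x. ennreal (exp (Y x)) * ennreal (g x) \<partial>M) \<le> ennreal K * (\<integral>\<^sup>+x. ennreal (exp (Y x)) \<partial>M)"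
proof -
  interpret prob_space M by (rule P)
  interpret finite_measure_subalgebra M F by unfold_locales (rule sub)
  define G where "G = (\<lambda>x. ennreal (g x))"
  have Gm: "G \<in> borel_measurable M" unfolding G_def using gm by simp
  have YF: "(\<lambda>x. ennreal (exp (Y x))) \<in> borel_measurable F" using Y by simp
  have YM: "(\<lambda>x. ennreal (exp (Y x))) \<in> borel_measurable M"
    using measurable_from_subalg[OF sub YF] .
  have z: "(\<lambda>x. ennreal (- g x)) = (\<lambda>x. 0)" using g0 by (intro ext) (simp add: ennreal_neg)
  have n0: "AE x in M. nn_cond_exp M F (\<lambda>x. ennreal (- g x)) x = 0"
    unfolding z using nn_cond_exp_F_meas[of "\<lambda>x. 0"] by (auto elim: AE_mp)
  have "(\<integral>\<^sup>+x. nn_cond_exp M F G x \<partial>M) = (\<integral>\<^sup>+x. 1 * nn_cond_exp M F G x \<partial>M)" by simp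
  also have "\<dots> = (\<integral>\<^sup>+x. 1 * G x \<partial>M)" by (rule nn_cond_exp_intg) (auto simp: Gm)
  also have "\<dots> = (\<integral>\<^sup>+x. ennreal (g x) \<partial>M)" unfolding G_def by simp
  finally have "(\<integral>\<^sup>+x. nn_cond_exp M F G x \<partial>M) \<noteq> \<infinity>" using integrableD(2)[OF gi] by simp
  then have fin: "AE x in M. nn_cond_exp M F G x \<noteq> \<infinity>"
    by (intro nn_integral_PInf_AE) simp_all
  have bnd: "AE x in M. nn_cond_exp M F G x \<le> ennreal K"
    using K n0 fin
  proof eventually_elim
    case (elim x)
    have "real_cond_exp M F g x = enn2real (nn_cond_exp M F G x)"
      unfolding real_cond_exp_def G_def using elim(2) by simp
    then have "enn2real (nn_cond_exp M F G x) \<le> K" using elim(1) by simp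
    have "nn_cond_exp M F G x = ennreal (enn2real (nn_cond_exp M F G x))" using elim(3) by (simp add: ennreal_enn2real_if)
    also have "\<dots> \<le> ennreal K" using \<open>enn2real (nn_cond_exp M F G x) \<le> K\<close> by (rule ennreal_leI)
    finally show ?case .
  qed
  have "(\<integral>\<^sup>+x. ennreal (exp (Y x)) * G x \<partial>M) = (\<integral>\<^sup>+x. ennreal (exp (Y x)) * nn_cond_exp M F G x \<partial>M)"
    by (rule nn_cond_exp_intg[symmetric]) (auto simp: Gm YF)
  also have "\<dots> \<le> (\<integral>\<^sup>+x. ennreal (exp (Y x)) * ennreal K \<partial>M)"
  proof (rule nn_integral_mono_AE)
    show "AE x in M. ennreal (exp (Y x)) * nn_cond_exp M F G x \<le> ennreal (exp (Y x)) * ennreal K"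
      using bnd by eventually_elim (rule mult_left_mono, simp_all)
  qed
  also have "\<dots> = ennreal K * (\<integral>\<^sup>+x. ennreal (exp (Y x)) \<partial>M)"
    by (subst mult.commute) (rule nn_integral_cmult[OF YM])
  finally show ?thesis unfolding G_def .
qed


lemma noise_modelD:
  assumes "noise_model M F R"
  shows "prob_space M" "\<And>t. subalgebra M (F t)" "\<And>t. sets (F t) \<subseteq> sets (F (Suc t))"
    "\<And>t. (\<lambda>\<omega>. \<omega> t) \<in> borel_measurable (F (Suc t))"
    "\<And>t s. integrable M (\<lambda>\<omega>. exp (s * \<omega> t))"
    "\<And>t s. AE \<omega> in M. real_cond_exp M (F t) (\<lambda>\<omega>. exp (s * \<omega> t)) \<omega> \<le> exp (s\<^sup>2 * R\<^sup>2 / 2)"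
  using assms by (simp_all add: noise_model_def)

lemma noise_meas_F:
  assumes NM: "noise_model M F R" and t: "t < n"
  shows "(\<lambda>\<omega>. \<omega> t) \<in> borel_measurable (F n)"
proof -
  have mono: "sets (F (Suc t)) \<subseteq> sets (F (Suc t + k))" for k
  proof (induction k)
    case 0 then show ?case by simp
  next
    case (Suc k) then show ?case using noise_modelD(3)[OF NM, of "Suc t + k"] by simp
  qed
  obtain k where n: "n = Suc t + k" using t less_imp_Suc_add by blast
  have "subalgebra (F n) (F (Suc t))"
    unfolding subalgebra_def using mono[of k] n noise_modelD(2)[OF NM, of n] noise_modelD(2)[OF NM, of "Suc t"]
    unfolding subalgebra_def by simp
  then show ?thesis using measurable_from_subalg noise_modelD(4)[OF NM, of t] by blast
qed

lemma noise_meas_M: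
  assumes NM: "noise_model M F R"
  shows "(\<lambda>\<omega>. \<omega> t) \<in> borel_measurable M"
  using measurable_from_subalg[OF noise_modelD(2)[OF NM, of "Suc t"] noise_modelD(4)[OF NM, of t]] .

lemma mgf_bound:
  assumes NM: "noise_model M F R"
  shows "(\<integral>\<^sup>+\<omega>. ennreal (exp (s * (\<Sum>t<n. c t * \<omega> t))) \<partial>M)
     \<le> ennreal (exp (s\<^sup>2 * R\<^sup>2 * (\<Sum>t<n. (c t)\<^sup>2) / 2))"
proof (induction n)
  case 0
  interpret prob_space M by (rule noise_modelD(1)[OF NM])
  show ?case by (simp add: emeasure_space_1)
next
  case (Suc n)
  define Y where "Y = (\<lambda>\<omega>::nat \<Rightarrow> real. s * (\<Sum>t<n. c t * \<omega> t))"
  define g where "g = (\<lambda>\<omega>::nat \<Rightarrow> real. exp ((s * c n) * \<omega> n))"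
  define K where "K = exp ((s * c n)\<^sup>2 * R\<^sup>2 / 2)"
  have YF: "Y \<in> borel_measurable (F n)"
  proof -
    have "(\<lambda>\<omega>::nat \<Rightarrow> real. c t * \<omega> t) \<in> borel_measurable (F n)" if "t \<in> {..<n}" for t
      using noise_meas_F[OF NM, of t n] that by simp
    then have "(\<lambda>\<omega>::nat \<Rightarrow> real. \<Sum>t<n. c t * \<omega> t) \<in> borel_measurable (F n)"
      by (rule borel_measurable_sum)
    then show ?thesis unfolding Y_def by simp
  qed
  have mn[measurable]: "(\<lambda>\<omega>::nat \<Rightarrow> real. \<omega> n) \<in> borel_measurable M" by (rule noise_meas_M[OF NM])
  have gM: "g \<in> borel_measurable M" unfolding g_def by measurable
  have eq: "exp (s * (\<Sum>t<Suc n. c t * \<omega> t)) = exp (Y \<omega>) * g \<omega>" for \<omega>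
    unfolding Y_def g_def by (simp add: distrib_left exp_add mult.assoc)
  have "(\<integral>\<^sup>+\<omega>. ennreal (exp (s * (\<Sum>t<Suc n. c t * \<omega> t))) \<partial>M)
      = (\<integral>\<^sup>+\<omega>. ennreal (exp (Y \<omega>)) * ennreal (g \<omega>) \<partial>M)"
    unfolding eq g_def by (simp add: ennreal_mult)
  also have "\<dots> \<le> ennreal K * (\<integral>\<^sup>+\<omega>. ennreal (exp (Y \<omega>)) \<partial>M)"
    using noise_modelD(5,6)[OF NM] by (intro cond_exp_bound[OF noise_modelD(1)[OF NM] noise_modelD(2)[OF NM] YF gM]) (simp_all add: g_def K_def)
  also have "\<dots> \<le> ennreal K * ennreal (exp (s\<^sup>2 * R\<^sup>2 * (\<Sum>t<n. (c t)\<^sup>2) / 2))"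
    using Suc.IH unfolding Y_def by (intro mult_left_mono) simp_all
  also have "\<dots> = ennreal (exp (s\<^sup>2 * R\<^sup>2 * (\<Sum>t<Suc n. (c t)\<^sup>2) / 2))"
    unfolding K_def by (simp add: ennreal_mult[symmetric] exp_add[symmetric] field_simps power_mult_distrib)
  finally show ?case .
qed


lemma tail_one:
  assumes NM: "noise_model M F R" and x: "0 < x" and V: "0 < V" and R: "0 < R"
    and cV: "(\<Sum>t<n. (c t)\<^sup>2) \<le> V"
  shows "measure M {\<omega> \<in> space M. x \<le> (\<Sum>t<n. c t * \<omega> t)} \<le> exp (- (x\<^sup>2 / (2 * R\<^sup>2 * V)))"
proof -
  interpret prob_space M by (rule noise_modelD(1)[OF NM])
  have m[measurable]: "\<And>t. (\<lambda>\<omega>::nat \<Rightarrow> real. \<omega> t) \<in> borel_measurable M" by (rule noise_meas_M[OF NM])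
  define X where "X = (\<lambda>\<omega>::nat \<Rightarrow> real. \<Sum>t<n. c t * \<omega> t)"
  have Xm[measurable]: "X \<in> borel_measurable M" unfolding X_def by measurable
  define E where "E = {\<omega> \<in> space M. x \<le> X \<omega>}"
  have Em: "E \<in> sets M" unfolding E_def by measurable
  define s where "s = x / (R\<^sup>2 * V)"
  have s0: "0 < s" unfolding s_def using x V R by simp
  have ind: "indicator E \<omega> \<le> ennreal (exp (- (s * x)) * exp (s * X \<omega>))" for \<omega>
  proof (cases "\<omega> \<in> E")
    case True
    then have "s * x \<le> s * X \<omega>" unfolding E_def using s0 by (simp add: mult_left_mono)
    then have "1 \<le> exp (- (s * x)) * exp (s * X \<omega>)" by (simp add: exp_add[symmetric])
    then show ?thesis using True by simp
  next
    case False then show ?thesis by simp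
  qed
  have "emeasure M E = (\<integral>\<^sup>+\<omega>. indicator E \<omega> \<partial>M)" using Em by simp
  also have "\<dots> \<le> (\<integral>\<^sup>+\<omega>. ennreal (exp (- (s * x))) * ennreal (exp (s * X \<omega>)) \<partial>M)"
    using ind by (intro nn_integral_mono) (simp add: ennreal_mult)
  also have "\<dots> = ennreal (exp (- (s * x))) * (\<integral>\<^sup>+\<omega>. ennreal (exp (s * X \<omega>)) \<partial>M)"
    by (rule nn_integral_cmult) measurable
  also have "\<dots> \<le> ennreal (exp (- (s * x))) * ennreal (exp (s\<^sup>2 * R\<^sup>2 * (\<Sum>t<n. (c t)\<^sup>2) / 2))"
    unfolding X_def by (intro mult_left_mono mgf_bound[OF NM]) simp
  also have "\<dots> \<le> ennreal (exp (- (s * x))) * ennreal (exp (s\<^sup>2 * R\<^sup>2 * V / 2))"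
    using cV by (intro mult_left_mono ennreal_leI) (simp_all add: mult_left_mono)
  also have "\<dots> = ennreal (exp (- (x\<^sup>2 / (2 * R\<^sup>2 * V))))"
  proof -
    have "- (s * x) + s\<^sup>2 * R\<^sup>2 * V / 2 = - (x\<^sup>2 / (2 * R\<^sup>2 * V))"
      unfolding s_def using V R by (simp add: field_simps power2_eq_square)
    then show ?thesis by (simp add: ennreal_mult[symmetric] exp_add[symmetric])
  qed
  finally have "ennreal (measure M E) \<le> ennreal (exp (- (x\<^sup>2 / (2 * R\<^sup>2 * V))))"
    by (simp add: emeasure_eq_measure)
  then show ?thesis unfolding E_def X_def by (simp add: ennreal_le_iff)
qed

lemma tail_two:
  assumes NM: "noise_model M F R" and x: "0 < x" and V: "0 < V" and R: "0 < R"
    and cV: "(\<Sum>t<n. (c t)\<^sup>2) \<le> V"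
  shows "measure M {\<omega> \<in> space M. x < \<bar>\<Sum>t<n. c t * \<omega> t\<bar>} \<le> 2 * exp (- (x\<^sup>2 / (2 * R\<^sup>2 * V)))"
proof -
  interpret prob_space M by (rule noise_modelD(1)[OF NM])
  have m[measurable]: "\<And>t. (\<lambda>\<omega>::nat \<Rightarrow> real. \<omega> t) \<in> borel_measurable M" by (rule noise_meas_M[OF NM])
  define E1 where "E1 = {\<omega> \<in> space M. x \<le> (\<Sum>t<n. c t * \<omega> t)}"
  define E2 where "E2 = {\<omega> \<in> space M. x \<le> (\<Sum>t<n. (- c t) * \<omega> t)}"
  have E1m: "E1 \<in> sets M" unfolding E1_def by measurable
  have E2m: "E2 \<in> sets M" unfolding E2_def by measurable
  have sub: "{\<omega> \<in> space M. x < \<bar>\<Sum>t<n. c t * \<omega> t\<bar>} \<subseteq> E1 \<union> E2"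
    unfolding E1_def E2_def by (auto simp: sum_negf)
  have "measure M {\<omega> \<in> space M. x < \<bar>\<Sum>t<n. c t * \<omega> t\<bar>} \<le> measure M (E1 \<union> E2)"
    using sub E1m E2m by (intro finite_measure_mono) auto
  also have "\<dots> \<le> measure M E1 + measure M E2"
    using E1m E2m by (rule measure_Un_le)
  also have "\<dots> \<le> exp (- (x\<^sup>2 / (2 * R\<^sup>2 * V))) + exp (- (x\<^sup>2 / (2 * R\<^sup>2 * V)))"
    unfolding E1_def E2_def
    by (intro add_mono tail_one[OF NM x V R]) (use cV in simp_all)
  finally show ?thesis by simp
qed

lemma sum_if_min: "(\<Sum>t<T. if t < K then (1::real) else 0) = real (min T K)"
  by (induction T) (auto simp: min_def)

lemma card_paths:
  fixes A :: "real vec set"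
  assumes PS: "path_set d A"
  shows "card A \<le> 2 ^ d"
proof -
  have fin: "finite A" and dimA: "\<forall>a\<in>A. dim_vec a = d" and bin: "\<forall>a\<in>A. \<forall>j<d. a $ j = 0 \<or> a $ j = 1"
    using path_setD[OF PS] by auto
  define f where "f a = {j. j < d \<and> a $ j = 1}" for a :: "real vec"
  have inj: "inj_on f A"
  proof (rule inj_onI)
    fix x y assume x: "x \<in> A" and y: "y \<in> A" and fxy: "f x = f y"
    show "x = y"
    proof (rule eq_vecI)
      fix j assume "j < dim_vec y"
      then have j: "j < d" using dimA y by simp
      have "(x $ j = 1) = (y $ j = 1)" using fxy j unfolding f_def by (auto simp: set_eq_iff)
      then show "x $ j = y $ j" using bin x y j by metis
    qed (use dimA x y in simp)
  qed
  have "f ` A \<subseteq> Pow {..<d}" unfolding f_def by auto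
  then have "card A \<le> card (Pow {..<d :: nat})"
    using card_inj_on_le[OF inj] by simp
  then show ?thesis by (simp add: card_Pow)
qed

lemma regret_bound:
  fixes R S :: real and A :: "real vec set"
  assumes R: "R > 0" and S: "S > 0" and PS: "path_set d A" and UO: "unique_opt d A mu a_star"
    and two: "A \<noteq> {a_star}" and SP: "approx_bary_spanner d A S b" and NM: "noise_model M F R"
  shows "ttc_regret d A b mu S R M a_star T \<le> (384 * S\<^sup>2 * R\<^sup>2 + 3) *
      ((real d ^ 2 * ln (real T) + real d ^ 3) * Delta_max A mu a_star / (Delta_min A mu a_star)\<^sup>2)"
proof -
  interpret prob_space M by (rule noise_modelD(1)[OF NM])
  have m[measurable]: "\<And>t. (\<lambda>\<omega>::nat \<Rightarrow> real. \<omega> t) \<in> borel_measurable M" by (rule noise_meas_M[OF NM])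
  have fin: "finite A" and ne: "A \<noteq> {}" and dimA: "\<forall>a\<in>A. dim_vec a = d"
    and bin: "\<forall>a\<in>A. \<forall>j<d. a $ j = 0 \<or> a $ j = 1"
    using path_setD[OF PS] by auto
  have dmu: "dim_vec mu = d" and mu01: "\<forall>j<d. 0 \<le> mu $ j \<and> mu $ j \<le> 1" and ast: "a_star \<in> A"
    and opt: "\<forall>a\<in>A. a \<noteq> a_star \<longrightarrow> scalar_prod a_star mu < scalar_prod a mu"
    using UO unfolding unique_opt_def by auto
  obtain a1 where a1: "a1 \<in> A" "a1 \<noteq> a_star" using two ast by blast
  have d0: "0 < d"
  proof (rule ccontr)
    assume "\<not> 0 < d"
    then have "d = 0" by simp
    then have "\<forall>a\<in>A. dim_vec a = 0" using dimA by simp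
    then have "dim_vec a1 = 0" "dim_vec a_star = 0" using a1(1) ast by blast+
    then have "a1 = a_star" by (intro eq_vecI) simp_all
    then show False using a1 by simp
  qed
  have spd: "scalar_prod a x = (\<Sum>j<d. a $ j * x $ j)" if "dim_vec x = d" for a x :: "real vec"
    unfolding scalar_prod_def using that by (simp add: atLeast0LessThan)
  have trm01: "0 \<le> a $ j * mu $ j \<and> a $ j * mu $ j \<le> 1" if "a \<in> A" "j < d" for a j
  proof -
    have "a $ j = 0 \<or> a $ j = 1" using bin that by blast
    moreover have "0 \<le> mu $ j" "mu $ j \<le> 1" using mu01 that(2) by auto
    ultimately show ?thesis by auto
  qed
  have sp_lo: "0 \<le> scalar_prod a mu" if "a \<in> A" for a
    unfolding spd[OF dmu] using trm01 that by (intro sum_nonneg) auto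
  have sp_hi: "scalar_prod a mu \<le> real d" if "a \<in> A" for a
  proof -
    have "(\<Sum>j<d. a $ j * mu $ j) \<le> real (card {..<d}) * 1"
      using trm01 that by (intro sum_bounded_above) auto
    then show ?thesis unfolding spd[OF dmu] by simp
  qed
  define gap where "gap a = scalar_prod a mu - scalar_prod a_star mu" for a
  define Gs where "Gs = gaps A mu a_star"
  have Gs: "Gs = gap ` (A - {a_star})" unfolding Gs_def gaps_def gap_def by simp
  have Gfin: "finite Gs" and Gne: "Gs \<noteq> {}" using Gs fin a1 by auto
  define Dmin where "Dmin = Delta_min A mu a_star"
  define Dmax where "Dmax = Delta_max A mu a_star"
  have Dmin_eq: "Dmin = Min Gs" unfolding Dmin_def Delta_min_def Gs_def ..
  have Dmax_eq: "Dmax = Max Gs" unfolding Dmax_def Delta_max_def Gs_def ..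
  have gap_ge: "Dmin \<le> gap a" if "a \<in> A" "a \<noteq> a_star" for a
    unfolding Dmin_eq using Gfin Gs that by (intro Min_le) auto
  have gap_le: "gap a \<le> Dmax" if "a \<in> A" "a \<noteq> a_star" for a
    unfolding Dmax_eq using Gfin Gs that by (intro Max_ge) auto
  have Dmin0: "0 < Dmin"
  proof -
    have "Min Gs \<in> Gs" using Gfin Gne by (rule Min_in)
    then obtain a where "a \<in> A" "a \<noteq> a_star" "Dmin = gap a" unfolding Dmin_eq Gs by auto
    then show ?thesis using opt unfolding gap_def by auto
  qed
  have DminDmax: "Dmin \<le> Dmax" using gap_ge[OF a1] gap_le[OF a1] by simp
  have opt0: "0 \<le> scalar_prod a_star mu" using sp_lo[OF ast] .
  have Dmin_d: "Dmin \<le> real d" using gap_ge[OF a1] sp_hi[OF a1(1)] opt0 unfolding gap_def by simp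
  have bA: "\<And>i. i < d \<Longrightarrow> b i \<in> A" using SP unfolding approx_bary_spanner_def by auto
  define nu where "nu a = (SOME \<nu>. (\<forall>j<d. a $ j = (\<Sum>i<d. \<nu> i * b i $ j)) \<and> (\<forall>i<d. \<bar>\<nu> i\<bar> \<le> S))" for a
  have nu: "(\<forall>j<d. a $ j = (\<Sum>i<d. nu a i * b i $ j)) \<and> (\<forall>i<d. \<bar>nu a i\<bar> \<le> S)" if "a \<in> A" for a
  proof -
    have "\<exists>\<nu>. (\<forall>j<d. a $ j = (\<Sum>i<d. \<nu> i * b i $ j)) \<and> (\<forall>i<d. \<bar>\<nu> i\<bar> \<le> S)"
      using SP that unfolding approx_bary_spanner_def by blast
    then show ?thesis unfolding nu_def by (rule someI_ex)
  qed
  have sp_nu: "scalar_prod a x = (\<Sum>i<d. nu a i * scalar_prod (b i) x)" if "a \<in> A" "dim_vec x = d" for a x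
  proof -
    have "scalar_prod a x = (\<Sum>j<d. (\<Sum>i<d. nu a i * b i $ j) * x $ j)"
      unfolding spd[OF that(2)] using nu[OF that(1)] by simp
    also have "\<dots> = (\<Sum>i<d. nu a i * (\<Sum>j<d. b i $ j * x $ j))"
      unfolding sum_distrib_right sum_distrib_left mult.assoc by (rule sum.swap)
    also have "\<dots> = (\<Sum>i<d. nu a i * scalar_prod (b i) x)" unfolding spd[OF that(2)] ..
    finally show ?thesis .
  qed
  have lnT0: "0 \<le> ln (real T)" by (cases "T = 0") simp_all
  define Q where "Q = 2 * ln 2 * real d ^ 2 + 8 * real d * ln (real T)"
  have Q0: "0 < Q" unfolding Q_def using d0 lnT0 by (intro add_pos_nonneg) simp_all
  define Dt where "Dt m = S * R * sqrt (Q / real m)" for m :: nat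
  define mbar where "mbar = 16 * S\<^sup>2 * R\<^sup>2 * Q / Dmin\<^sup>2"
  have mbar0: "0 < mbar" unfolding mbar_def using S R Q0 Dmin0 by simp
  define Mn where "Mn = nat \<lfloor>mbar\<rfloor> + 1"
  have Mn0: "0 < Mn" unfolding Mn_def by simp
  have fl1: "real_of_int \<lfloor>mbar\<rfloor> \<le> mbar" using floor_correct[of mbar] by blast
  have "mbar < real_of_int (\<lfloor>mbar\<rfloor> + 1)" using floor_correct[of mbar] by blast
  then have fl2: "mbar < real_of_int \<lfloor>mbar\<rfloor> + 1" by simp
  have fl0: "0 \<le> \<lfloor>mbar\<rfloor>" using mbar0 by simp
  have rM: "real Mn = real_of_int \<lfloor>mbar\<rfloor> + 1" unfolding Mn_def using fl0 by simp
  have Mn_gt: "mbar < real Mn" and Mn_le: "real Mn \<le> mbar + 1"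
    using rM fl1 fl2 by linarith+
  have DtM: "4 * Dt Mn < Dmin"
  proof -
    define K where "K = 16 * S\<^sup>2 * R\<^sup>2 * Q"
    have K0: "0 < K" unfolding K_def using S R Q0 by simp
    have "(4 * Dt Mn)\<^sup>2 = K / real Mn"
      unfolding Dt_def K_def using Q0 Mn0 by (simp add: power_mult_distrib)
    also have "\<dots> < K / mbar"
      by (rule divide_strict_left_mono[OF Mn_gt K0]) (use Mn0 mbar0 in simp)
    also have "mbar = K / Dmin\<^sup>2" unfolding mbar_def K_def ..
    also have "K / (K / Dmin\<^sup>2) = Dmin\<^sup>2" using K0 Dmin0 by simp
    finally have "(4 * Dt Mn)\<^sup>2 < Dmin\<^sup>2" .
    then show ?thesis by (rule power_less_imp_less_base) (use Dmin0 in simp)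
  qed
  define c where "c a m t = nu a (t mod d) / real m" for a m t
  define Ev where "Ev a m = {\<omega> \<in> space M. Dt m < \<bar>\<Sum>t<m*d. c a m t * \<omega> t\<bar>}" for a m
  define I where "I = A \<times> {1..Mn}"
  define N where "N = (\<Union>p\<in>I. Ev (fst p) (snd p))"
  have Ev_sets: "Ev a m \<in> sets M" for a m unfolding Ev_def by measurable
  have Ifin: "finite I" unfolding I_def using fin by simp
  have N_sets: "N \<in> sets M" unfolding N_def using Ifin Ev_sets by auto
  have Ev_prob: "measure M (Ev a m) \<le> 2 * exp (- (real d * ln 2)) * exp (- (4 * ln (real T)))"
    if a: "a \<in> A" and m: "1 \<le> m" for a m
  proof -
    define V where "V = real d * S\<^sup>2 / real m"
    have V0: "0 < V" unfolding V_def using d0 S m by simp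
    have x0: "0 < Dt m" unfolding Dt_def using S R Q0 m by simp
    have cV: "(\<Sum>t<m*d. (c a m t)\<^sup>2) \<le> V"
    proof -
      have "(\<Sum>t<m*d. (c a m t)\<^sup>2) \<le> real (card {..<m*d}) * (S\<^sup>2 / (real m)\<^sup>2)"
      proof (rule sum_bounded_above)
        fix t assume "t \<in> {..<m*d}"
        have "\<bar>nu a (t mod d)\<bar> \<le> S" using nu[OF a] d0 by simp
        then have "(nu a (t mod d))\<^sup>2 \<le> S\<^sup>2" by (metis abs_le_square_iff abs_of_pos S)
        then show "(c a m t)\<^sup>2 \<le> S\<^sup>2 / (real m)\<^sup>2" unfolding c_def
          by (simp add: power_divide divide_right_mono)
      qed
      also have "\<dots> = V" unfolding V_def using m by (simp add: power2_eq_square field_simps)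
      finally show ?thesis .
    qed
    have "measure M (Ev a m) \<le> 2 * exp (- ((Dt m)\<^sup>2 / (2 * R\<^sup>2 * V)))"
      unfolding Ev_def by (rule tail_two[OF NM x0 V0 R cV])
    also have "(Dt m)\<^sup>2 / (2 * R\<^sup>2 * V) = real d * ln 2 + 4 * ln (real T)"
    proof -
      have Dt2: "(Dt m)\<^sup>2 = S\<^sup>2 * R\<^sup>2 * Q / real m"
        unfolding Dt_def using Q0 m by (simp add: power_mult_distrib)
      have "S\<^sup>2 * R\<^sup>2 * Q / real m / (2 * R\<^sup>2 * V) = Q / (2 * real d)"
        unfolding V_def using S R m d0 by (simp add: field_simps)
      also have "\<dots> = real d * ln 2 + 4 * ln (real T)"
        unfolding Q_def using d0 by (simp add: field_simps power2_eq_square)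
      finally show ?thesis unfolding Dt2 .
    qed
    finally show ?thesis by (simp add: exp_add[symmetric] algebra_simps)
  qed
  have PN: "measure M N \<le> 2 * real Mn * exp (- (4 * ln (real T)))"
  proof -
    have "measure M N \<le> (\<Sum>p\<in>I. measure M (Ev (fst p) (snd p)))"
      unfolding N_def using Ifin Ev_sets by (intro measure_subadditive_finite) auto
    also have "\<dots> \<le> real (card I) * (2 * exp (- (real d * ln 2)) * exp (- (4 * ln (real T))))"
      using Ev_prob unfolding I_def by (intro sum_bounded_above) auto
    also have "real (card I) = real (card A) * real Mn" unfolding I_def by (simp add: card_cartesian_product)
    also have "real (card A) \<le> 2 ^ d" using card_paths[OF PS] by (metis of_nat_le_iff of_nat_numeral of_nat_power)
    then have "real (card A) * real Mn * (2 * exp (- (real d * ln 2)) * exp (- (4 * ln (real T))))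
        \<le> 2 ^ d * real Mn * (2 * exp (- (real d * ln 2)) * exp (- (4 * ln (real T))))"
      by (intro mult_right_mono) simp_all
    also have "2 ^ d * exp (- (real d * ln 2)) = (1::real)"
    proof -
      have "exp (real d * ln 2) = (2::real) ^ d" by (simp add: exp_of_nat_mult)
      then show ?thesis by (simp add: exp_minus field_simps)
    qed
    then have "2 ^ d * real Mn * (2 * exp (- (real d * ln 2)) * exp (- (4 * ln (real T))))
        = 2 * real Mn * exp (- (4 * ln (real T)))" by (simp add: algebra_simps)
    finally show ?thesis by simp
  qed
  have TPN: "real T * measure M N \<le> 2 * real Mn"
  proof (cases "T = 0")
    case True then show ?thesis by simp
  next
    case False
    then have T1: "1 \<le> real T" by simp
    have "exp (- (4 * ln (real T))) \<le> exp (- ln (real T))" using lnT0 by simp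
    also have "\<dots> = 1 / real T" using T1 by (simp add: exp_minus inverse_eq_divide)
    finally have "exp (- (4 * ln (real T))) \<le> 1 / real T" .
    then have "2 * real Mn * exp (- (4 * ln (real T))) \<le> 2 * real Mn * (1 / real T)"
      by (intro mult_left_mono) simp_all
    then have "measure M N \<le> 2 * real Mn * (1 / real T)" using PN by linarith
    then have "real T * measure M N \<le> real T * (2 * real Mn * (1 / real T))"
      using T1 by (intro mult_left_mono) simp_all
    also have "\<dots> = 2 * real Mn" using T1 by simp
    finally show ?thesis .
  qed
  have cardA: "card A \<noteq> 1"
  proof
    assume "card A = 1"
    then obtain x where "A = {x}" by (rule card_1_singletonE)
    then show False using a1 ast by simp
  qed
  have good: "ttc_path d A b mu S R T \<omega> t = a_star"
    if w: "\<omega> \<in> space M" "\<omega> \<notin> N" and t: "Mn * d \<le> t" for \<omega> t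
  proof -
    have est: "\<bar>scalar_prod a (ls_estimate d (hist d b mu \<omega> (m*d))) - scalar_prod a mu\<bar> \<le> Dt m"
      if a: "a \<in> A" and m: "1 \<le> m" "m \<le> Mn" for a m
    proof -
      define lh where "lh = ls_estimate d (hist d b mu \<omega> (m*d))"
      have m0: "0 < m" using m by simp
      have dl: "dim_vec lh = d" unfolding lh_def by (rule ls_hist(1)[OF PS SP dmu d0 m0 d0])
      have "scalar_prod a lh - scalar_prod a mu = (\<Sum>i<d. nu a i * (scalar_prod (b i) lh - scalar_prod (b i) mu))"
        unfolding sp_nu[OF a dl] sp_nu[OF a dmu] by (simp add: sum_subtractf right_diff_distrib)
      also have "\<dots> = (\<Sum>i<d. nu a i * ((\<Sum>k<m. \<omega> (k*d+i)) / real m))"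
        unfolding lh_def by (intro sum.cong refl) (simp add: ls_hist(2)[OF PS SP dmu d0 m0])
      also have "\<dots> = (\<Sum>i<d. \<Sum>k<m. c a m (k*d+i) * \<omega> (k*d+i))"
        unfolding c_def by (intro sum.cong refl) (simp add: sum_divide_distrib sum_distrib_left)
      also have "\<dots> = (\<Sum>t<m*d. c a m t * \<omega> t)" by (rule sum_reindex_md[symmetric])
      finally have eq: "scalar_prod a lh - scalar_prod a mu = (\<Sum>t<m*d. c a m t * \<omega> t)" .
      have "(a, m) \<in> I" unfolding I_def using a m by simp
      then have "\<omega> \<notin> Ev a m" using w unfolding N_def by auto
      then show ?thesis using w(1) eq unfolding Ev_def lh_def by auto
    qed
    have lenh: "length (hist d b mu \<omega> (m*d)) div d = m" for m using d0 by simp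
    have dg: "ttc_decide d A S R T (hist d b mu \<omega> (m*d)) \<in> {None, Some a_star}"
      if "1 \<le> m" "m \<le> Mn" for m
      by (rule decide_good(1)[OF fin ast two gap_ge[unfolded gap_def] Dmin0 _ est]) (use that lenh in \<open>simp_all add: Dt_def Q_def\<close>)
    have dM: "ttc_decide d A S R T (hist d b mu \<omega> (Mn*d)) = Some a_star"
      by (rule decide_good(2)[OF fin ast two gap_ge[unfolded gap_def] Dmin0 _ est]) (use Mn0 lenh DtM in \<open>simp_all add: Dt_def Q_def\<close>)
    have "fst (ttc_state d A b mu S R T \<omega> t) = Some a_star"
      by (rule st_good[OF d0 Mn0 cardA dg dM t])
    then show ?thesis unfolding ttc_path_def by (auto split: prod.splits)
  qed
  define f where "f t \<omega> = scalar_prod (ttc_path d A b mu S R T \<omega> t) mu" for t \<omega>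
  have f_le: "f t \<omega> \<le> scalar_prod a_star mu + Dmax" for t \<omega>
  proof -
    have pA: "ttc_path d A b mu S R T \<omega> t \<in> A" by (rule path_in_A[OF fin ne d0 bA])
    show ?thesis
    proof (cases "ttc_path d A b mu S R T \<omega> t = a_star")
      case True then show ?thesis unfolding f_def using DminDmax Dmin0 by simp
    next
      case False then show ?thesis unfolding f_def using gap_le[OF pA False] unfolding gap_def by simp
    qed
  qed
  have int_le: "integral\<^sup>L M (f t) \<le> scalar_prod a_star mu + Dmax * (if t < Mn * d then 1 else measure M N)" for t
  proof -
    define p where "p = (if t < Mn * d then 1 else measure M N)"
    define g where "g \<omega> = scalar_prod a_star mu + Dmax * (if t < Mn * d then 1 else indicator N \<omega>)" for \<omega>
    have iN: "integrable M (indicator N :: _ \<Rightarrow> real)"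
      using N_sets by (intro Bochner_Integration.integrable_real_indicator) (simp_all add: less_top[symmetric])
    have gi: "integrable M g"
    proof (cases "t < Mn * d")
      case True then show ?thesis unfolding g_def by simp
    next
      case False then show ?thesis unfolding g_def using iN by simp
    qed
    have gint: "integral\<^sup>L M g = scalar_prod a_star mu + Dmax * p"
    proof (cases "t < Mn * d")
      case True then show ?thesis unfolding g_def p_def by (simp add: prob_space)
    next
      case False
      have "integral\<^sup>L M g = integral\<^sup>L M (\<lambda>\<omega>. scalar_prod a_star mu) + integral\<^sup>L M (\<lambda>\<omega>. Dmax * indicator N \<omega>)"
        unfolding g_def using False iN by (simp add: Bochner_Integration.integral_add)
      also have "\<dots> = scalar_prod a_star mu + Dmax * measure M N"
        using N_sets by (simp add: prob_space sets.Int_space_eq2)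
      finally show ?thesis unfolding p_def using False by simp
    qed
    have p0: "0 \<le> p" unfolding p_def by simp
    show ?thesis
    proof (cases "integrable M (f t)")
      case True
      have "integral\<^sup>L M (f t) \<le> integral\<^sup>L M g"
      proof (rule integral_mono[OF True gi])
        fix \<omega> assume w: "\<omega> \<in> space M"
        show "f t \<omega> \<le> g \<omega>"
        proof (cases "t < Mn * d \<or> \<omega> \<in> N")
          case True then show ?thesis unfolding g_def using f_le[of t \<omega>] by auto
        next
          case False
          then have "f t \<omega> = scalar_prod a_star mu" unfolding f_def using good[OF w] by simp
          then show ?thesis unfolding g_def using False DminDmax Dmin0 by simp
        qed
      qed
      then show ?thesis using gint unfolding p_def by simp
    next
      case False
      then have "integral\<^sup>L M (f t) = 0" by (rule not_integrable_integral_eq)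
      then show ?thesis using opt0 p0 DminDmax Dmin0 unfolding p_def by simp
    qed
  qed
  have "ttc_regret d A b mu S R M a_star T = (\<Sum>t<T. integral\<^sup>L M (f t)) - real T * scalar_prod a_star mu"
    unfolding ttc_regret_def f_def ..
  also have "\<dots> \<le> (\<Sum>t<T. scalar_prod a_star mu + Dmax * (if t < Mn * d then 1 else measure M N)) - real T * scalar_prod a_star mu"
    using int_le by (intro diff_right_mono sum_mono) auto
  also have "\<dots> = Dmax * (\<Sum>t<T. if t < Mn * d then 1 else measure M N)"
    by (simp add: sum.distrib sum_distrib_left)
  also have "(\<Sum>t<T. if t < Mn * d then 1 else measure M N) \<le> (\<Sum>t<T. (if t < Mn * d then 1 else 0) + measure M N)"
    by (intro sum_mono) simp
  also have "\<dots> = real (min T (Mn * d)) + real T * measure M N"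
    by (simp add: sum.distrib sum_if_min)
  also have "\<dots> \<le> real Mn * real d + 2 * real Mn"
  proof -
    have "min T (Mn * d) \<le> Mn * d" by simp
    then have "real (min T (Mn * d)) \<le> real (Mn * d)" by (rule of_nat_mono)
    then have "real (min T (Mn * d)) \<le> real Mn * real d" by simp
    then show ?thesis using TPN by linarith
  qed
  finally have r1: "ttc_regret d A b mu S R M a_star T \<le> Dmax * (real Mn * real d + 2 * real Mn)"
    using DminDmax Dmin0 by (simp add: mult_left_mono)
  have "Dmax * (real Mn * real d + 2 * real Mn) \<le> Dmax * (3 * real d * real Mn)"
  proof (rule mult_left_mono)
    have d1: "1 \<le> real d" using d0 by simp
    have "real Mn * 1 \<le> real Mn * real d" using d1 by (intro mult_left_mono) simp_all
    moreover have "3 * real d * real Mn = 3 * (real Mn * real d)" by simp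
    ultimately show "real Mn * real d + 2 * real Mn \<le> 3 * real d * real Mn" by linarith
  qed (use DminDmax Dmin0 in simp)
  also have "\<dots> \<le> Dmax * (3 * real d * (mbar + 1))"
    using d0 DminDmax Dmin0 Mn_le by (intro mult_left_mono) simp_all
  also have "\<dots> = 3 * Dmax * real d * mbar + 3 * real d * Dmax" by (simp add: algebra_simps)
  also have "\<dots> \<le> 384 * S\<^sup>2 * R\<^sup>2 * ((real d ^ 2 * ln (real T) + real d ^ 3) * Dmax / Dmin\<^sup>2)
      + 3 * ((real d ^ 2 * ln (real T) + real d ^ 3) * Dmax / Dmin\<^sup>2)"
  proof (rule add_mono)
    have k0: "0 \<le> S\<^sup>2 * R\<^sup>2 * Dmax / Dmin\<^sup>2" using DminDmax Dmin0 by simp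
    have "48 * real d * Q \<le> 384 * (real d ^ 2 * ln (real T) + real d ^ 3)"
    proof -
      have "ln (2::real) \<le> 1" using ln_2_less_1 by simp
      then have "96 * ln 2 * real d ^ 3 \<le> 384 * real d ^ 3" by (intro mult_right_mono) simp_all
      then show ?thesis unfolding Q_def by (simp add: algebra_simps power2_eq_square power3_eq_cube)
    qed
    then have "(S\<^sup>2 * R\<^sup>2 * Dmax / Dmin\<^sup>2) * (48 * real d * Q)
        \<le> (S\<^sup>2 * R\<^sup>2 * Dmax / Dmin\<^sup>2) * (384 * (real d ^ 2 * ln (real T) + real d ^ 3))"
      using k0 by (rule mult_left_mono)
    then show "3 * Dmax * real d * mbar \<le> 384 * S\<^sup>2 * R\<^sup>2 * ((real d ^ 2 * ln (real T) + real d ^ 3) * Dmax / Dmin\<^sup>2)"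
      unfolding mbar_def by (simp add: field_simps)
  next
    have "Dmin\<^sup>2 \<le> (real d)\<^sup>2" using Dmin0 Dmin_d by (intro power_mono) simp_all
    then have "real d * Dmin\<^sup>2 \<le> real d ^ 3" using d0 by (simp add: power2_eq_square power3_eq_cube mult_left_mono)
    then have "real d \<le> real d ^ 3 / Dmin\<^sup>2" using Dmin0 by (simp add: field_simps)
    also have "\<dots> \<le> (real d ^ 2 * ln (real T) + real d ^ 3) / Dmin\<^sup>2"
      using lnT0 Dmin0 by (intro divide_right_mono) simp_all
    finally have "Dmax * real d \<le> Dmax * ((real d ^ 2 * ln (real T) + real d ^ 3) / Dmin\<^sup>2)"
      using DminDmax Dmin0 by (intro mult_left_mono) simp_all
    then have "Dmax * real d \<le> (real d ^ 2 * ln (real T) + real d ^ 3) * Dmax / Dmin\<^sup>2"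
      by (metis mult.commute times_divide_eq_left)
    then show "3 * real d * Dmax \<le> 3 * ((real d ^ 2 * ln (real T) + real d ^ 3) * Dmax / Dmin\<^sup>2)"
      by (simp add: mult.commute)
  qed
  also have "\<dots> = (384 * S\<^sup>2 * R\<^sup>2 + 3) * ((real d ^ 2 * ln (real T) + real d ^ 3) * Dmax / Dmin\<^sup>2)"
    by (simp only: distrib_right)
  finally show ?thesis using r1 unfolding Dmax_def Dmin_def by simp
qed

theorem theorem5p2:
  fixes R S :: real
  assumes "R > 0" and "S > 0"
  shows "\<exists>C::real. \<forall>(d::nat) (A::real vec set) (mu::real vec) (a_star::real vec)
      (b::nat \<Rightarrow> real vec) (M::(nat \<Rightarrow> real) measure) (F::nat \<Rightarrow> (nat \<Rightarrow> real) measure) (T::nat).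
      path_set d A \<and> unique_opt d A mu a_star \<and> A \<noteq> {a_star} \<and>
      approx_bary_spanner d A S b \<and> noise_model M F R \<and>
      real T \<ge> real d * (S\<^sup>2 * R\<^sup>2 * (32 * ln 2 * real d ^ 2 + 128 * real d * ln (real T))
                          / (Delta_min A mu a_star)\<^sup>2)
      \<longrightarrow> ttc_regret d A b mu S R M a_star T
          \<le> C * ((real d ^ 2 * ln (real T) + real d ^ 3) * Delta_max A mu a_star
                 / (Delta_min A mu a_star)\<^sup>2)"
proof -
  have "path_set d A \<and> unique_opt d A mu a_star \<and> A \<noteq> {a_star} \<and>
      approx_bary_spanner d A S b \<and> noise_model M F R \<and>
      real T \<ge> real d * (S\<^sup>2 * R\<^sup>2 * (32 * ln 2 * real d ^ 2 + 128 * real d * ln (real T))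
                          / (Delta_min A mu a_star)\<^sup>2)
      \<longrightarrow> ttc_regret d A b mu S R M a_star T
          \<le> (384 * S\<^sup>2 * R\<^sup>2 + 3) * ((real d ^ 2 * ln (real T) + real d ^ 3) * Delta_max A mu a_star
                 / (Delta_min A mu a_star)\<^sup>2)"
    for d :: nat and A :: "real vec set" and mu :: "real vec" and a_star :: "real vec"
      and b :: "nat \<Rightarrow> real vec" and M :: "(nat \<Rightarrow> real) measure"
      and F :: "nat \<Rightarrow> (nat \<Rightarrow> real) measure" and T :: nat
  proof (intro impI, elim conjE)
    assume "path_set d A" "unique_opt d A mu a_star" "A \<noteq> {a_star}"
      "approx_bary_spanner d A S b" "noise_model M F R"
    then show "ttc_regret d A b mu S R M a_star T
          \<le> (384 * S\<^sup>2 * R\<^sup>2 + 3) * ((real d ^ 2 * ln (real T) + real d ^ 3) * Delta_max A mu a_star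
                 / (Delta_min A mu a_star)\<^sup>2)"
      by (rule regret_bound[OF assms(1) assms(2)])
  qed
  then show ?thesis by blast
qed

end
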